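(* Assume $g$ satisfies (Hg) and (Hg1), and let $k>0$. Let $(a,d)\in\overline{\mathcal D^-(k)}\cap\mathcal H$ and $\underline a\in(0,a)$. Then $(\underline a,d)\in\mathcal D^-(k)$.
   Context: Let $\mathcal H=(0,1)\times(0,\infty)$. A function $g:\mathbb R\times[0,1]\to\mathbb R$, $(u,a)\mapsto g(u;a)$, satisfies (Hg) if it is $C^1$ and for every $a\in(0,1)$: $g(0;a)=g(a;a)=g(1;a)=0$, $g'(0;a)<0$, $g'(1;a)<0$, $g'(a;a)>0$ (where $g'=\partial_u g$), $g(v;a)>0$ for $v\in(-\infty,0)\cup(a,1)$ and $g(v;a)<0$ for $v\in(0,a)\cup(1,\infty)$. (Hg1): $\partial_a g(v;a)<0$ for all $a,v\in(0,1)$. For $A\in(0,1)$ let $d^\diamond(A;a)=\inf\{d>0:\ d(k+1)(A-v)-g(A;a)\ge -g(v;a)\ \text{for all }v\in[0,A]\}$ and $\mathcal D^-(k)=\{(a,d)\in\mathcal H:\ d^\diamond(A;a)<d<g(A;a)/A$ for some $A\in(a,1)\}$; the closure is taken in $\mathbb R^2$. *)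

theory Defs
  imports "HOL-Analysis.Analysis"
begin

text \<open>g u a is g(u;a). C^1 on R x [0,1]: a Frechet derivative within R x [0,1]
  given by continuous partial derivatives gu (w.r.t. u) and ga (w.r.t. a).\<close>
definition C1_g :: "(real \<Rightarrow> real \<Rightarrow> real) \<Rightarrow> bool" where
  "C1_g g \<longleftrightarrow> (\<exists>gu ga :: real \<Rightarrow> real \<Rightarrow> real.
      continuous_on (UNIV \<times> {0..1}) (\<lambda>(u,a). gu u a) \<and>
      continuous_on (UNIV \<times> {0..1}) (\<lambda>(u,a). ga u a) \<and>
      (\<forall>u a. a \<in> {0..1} \<longrightarrow>
         ((\<lambda>(x,y). g x y) has_derivative (\<lambda>(h,l). gu u a * h + ga u a * l))
           (at (u,a) within UNIV \<times> {0..1})))"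

definition Hg :: "(real \<Rightarrow> real \<Rightarrow> real) \<Rightarrow> bool" where
  "Hg g \<longleftrightarrow> C1_g g \<and>
     (\<forall>a. 0 < a \<and> a < 1 \<longrightarrow>
        g 0 a = 0 \<and> g a a = 0 \<and> g 1 a = 0 \<and>
        deriv (\<lambda>u. g u a) 0 < 0 \<and> deriv (\<lambda>u. g u a) 1 < 0 \<and> deriv (\<lambda>u. g u a) a > 0 \<and>
        (\<forall>v. (v < 0 \<or> (a < v \<and> v < 1)) \<longrightarrow> g v a > 0) \<and>
        (\<forall>v. ((0 < v \<and> v < a) \<or> 1 < v) \<longrightarrow> g v a < 0))"

definition Hg1 :: "(real \<Rightarrow> real \<Rightarrow> real) \<Rightarrow> bool" where
  "Hg1 g \<longleftrightarrow> (\<forall>a v. 0 < a \<and> a < 1 \<and> 0 < v \<and> v < 1 \<longrightarrow> deriv (\<lambda>b. g v b) a < 0)"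

text \<open>d-diamond as an extended real: the infimum of the empty set is +infinity.\<close>
definition d_diamond :: "(real \<Rightarrow> real \<Rightarrow> real) \<Rightarrow> real \<Rightarrow> real \<Rightarrow> real \<Rightarrow> ereal" where
  "d_diamond g k A a = Inf (ereal ` {d. d > 0 \<and>
      (\<forall>v\<in>{0..A}. d * (k + 1) * (A - v) - g A a \<ge> - g v a)})"

definition H_set :: "(real \<times> real) set" where
  "H_set = {0<..<1} \<times> {0<..}"

definition D_minus :: "(real \<Rightarrow> real \<Rightarrow> real) \<Rightarrow> real \<Rightarrow> (real \<times> real) set" where
  "D_minus g k = {(a,d). (a,d) \<in> H_set \<and>
      (\<exists>A. a < A \<and> A < 1 \<and> d_diamond g k A a < ereal d \<and> d < g A a / A)}"

end

theory Submission
  imports Defs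
begin


lemma core:
  fixes G :: "real \<Rightarrow> real" and A d c l :: real
  assumes cont: "continuous_on {0..1} G"
    and A: "0 < A" "A < 1" and l: "0 < l" and dc: "d \<le> c"
    and GA: "G A > d * A + l" and G1: "G 1 - d < l"
    and low: "\<forall>v\<in>{0..A}. G v > l + d * A - c * (A - v)"
  shows "\<exists>Y. A < Y \<and> Y < 1 \<and> G Y > d * Y \<and> (\<forall>v\<in>{0..Y}. G Y - G v \<le> c * (Y - v))"
proof -
  define T where "T = {A..1} \<inter> (\<lambda>v. G v - d * v) -` {..l}"
  have cT: "continuous_on {A..1} (\<lambda>v. G v - d * v)"
    by (intro continuous_intros continuous_on_subset[OF cont]) (use A in auto)
  have "closed T" unfolding T_def
    by (rule continuous_closed_preimage[OF cT]) auto
  moreover have "1 \<in> T" using G1 A unfolding T_def by auto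
  moreover have "bdd_below T" unfolding T_def by (rule bdd_belowI[of _ A]) auto
  ultimately have Y0T: "Inf T \<in> T" using closed_contains_Inf by blast
  define Y0 where "Y0 = Inf T"
  have Y0: "A \<le> Y0" "Y0 \<le> 1" "G Y0 - d * Y0 \<le> l" using Y0T unfolding Y0_def T_def by auto
  have notT: "G v - d * v > l" if "A \<le> v" "v < Y0" for v
  proof (rule ccontr)
    assume "\<not> ?thesis"
    then have "v \<in> T" using that Y0 unfolding T_def by auto
    then have "Y0 \<le> v" unfolding Y0_def by (rule cInf_lower) fact
    then show False using that by simp
  qed
  have Y0eq: "G Y0 - d * Y0 = l"
  proof (rule ccontr)
    assume "G Y0 - d * Y0 \<noteq> l"
    then have lt: "G Y0 - d * Y0 < l" using Y0 by simp
    have "\<exists>x. A \<le> x \<and> x \<le> Y0 \<and> G x - d * x = l"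
      by (rule IVT2'[of "\<lambda>v. G v - d * v"]) (use lt GA Y0 in \<open>auto intro: continuous_on_subset[OF cT]\<close>)
    then obtain x where x: "A \<le> x" "x \<le> Y0" "G x - d * x = l" by blast
    then have "x = Y0" using notT[of x] by force
    then show False using x lt by simp
  qed
  have "Y0 \<noteq> 1" using Y0eq G1 by auto
  with Y0 have Y01: "Y0 < 1" by simp
  have AY0: "A < Y0" using Y0eq GA Y0 by (cases "A = Y0") auto
  have "continuous_on {0..Y0} (\<lambda>v. G v - c * v)"
    by (intro continuous_intros continuous_on_subset[OF cont]) (use Y0 in auto)
  then obtain Y where Y: "Y \<in> {0..Y0}" and Ymin: "\<forall>v\<in>{0..Y0}. G Y - c * Y \<le> G v - c * v"
    using continuous_attains_inf[of "{0..Y0}" "\<lambda>v. G v - c * v"] A Y0 by auto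
  have big: "G v - c * v > G Y0 - c * Y0" if "v \<in> {0..A}" for v
  proof -
    have "G v > l + d * A - c * (A - v)" using low that by auto
    moreover have "(c - d) * (Y0 - A) \<ge> 0" using dc Y0 by simp
    ultimately show ?thesis using Y0eq by (simp add: algebra_simps)
  qed
  have AY: "A < Y"
  proof (rule ccontr)
    assume "\<not> A < Y"
    then have "Y \<in> {0..A}" using Y by auto
    note b = big[OF this]
    have "Y0 \<in> {0..Y0}" using AY0 A by auto
    with b Ymin show False by force
  qed
  have pos: "G Y > d * Y"
  proof (cases "Y = Y0")
    case True then show ?thesis using Y0eq l by simp
  next
    case False then have "Y < Y0" using Y by auto
    then show ?thesis using notT[of Y] AY l by simp
  qed
  show ?thesis
  proof (intro exI conjI)
    show "A < Y" by fact
    show "Y < 1" using Y Y01 by simp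
    show "G Y > d * Y" by fact
    show "\<forall>v\<in>{0..Y}. G Y - G v \<le> c * (Y - v)"
      using Ymin Y by (auto simp: algebra_simps)
  qed
qed


lemma C1_partials:
  assumes "C1_g g"
  obtains gu ga where
    "\<And>u b. b \<in> {0..1} \<Longrightarrow> ((\<lambda>u. g u b) has_real_derivative gu u b) (at u)"
    "\<And>v b. 0 < b \<Longrightarrow> b < 1 \<Longrightarrow> ((\<lambda>b. g v b) has_real_derivative ga v b) (at b)"
proof -
  from assms obtain gu ga :: "real \<Rightarrow> real \<Rightarrow> real" where
    H: "\<forall>u a. a \<in> {0..1} \<longrightarrow>
         ((\<lambda>(x,y). g x y) has_derivative (\<lambda>(h,l). gu u a * h + ga u a * l))
           (at (u,a) within UNIV \<times> {0..1})"
    unfolding C1_g_def by blast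
  have H': "\<And>p. p \<in> UNIV \<times> {0..1} \<Longrightarrow> ((\<lambda>(x,y). g x y) has_derivative
      (\<lambda>p. \<lambda>(h,l). gu (fst p) (snd p) * h + ga (fst p) (snd p) * l) p) (at p within UNIV \<times> {0..1})"
    using H by auto
  have 1: "((\<lambda>u. g u b) has_real_derivative gu u b) (at u)" if b: "b \<in> {0..1}" for u b
  proof -
    have "((\<lambda>x. (\<lambda>(x,y). g x y) (x, b)) has_derivative
        (\<lambda>y. (\<lambda>p. \<lambda>(h,l). gu (fst p) (snd p) * h + ga (fst p) (snd p) * l) (u, b) (y, 0))) (at u within UNIV)"
      by (rule has_derivative_in_compose2[OF H', of "\<lambda>x. (x, b)" UNIV])
        (use b in \<open>auto intro!: derivative_eq_intros\<close>)
    then show ?thesis by (simp add: has_field_derivative_def)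
  qed
  have 2: "((\<lambda>b. g v b) has_real_derivative ga v b) (at b)" if b: "0 < b" "b < 1" for v b
  proof -
    have "((\<lambda>x. (\<lambda>(x,y). g x y) (v, x)) has_derivative
        (\<lambda>y. (\<lambda>p. \<lambda>(h,l). gu (fst p) (snd p) * h + ga (fst p) (snd p) * l) (v, b) (0, y))) (at b within {0..1})"
      by (rule has_derivative_in_compose2[OF H', of "\<lambda>x. (v, x)" "{0..1}"])
        (use b in \<open>auto intro!: derivative_eq_intros\<close>)
    then have "((\<lambda>b. g v b) has_derivative (\<lambda>y. ga v b * y)) (at b within {0..1})"
      by simp
    then show ?thesis using b by (simp add: has_field_derivative_def at_within_Icc_at)
  qed
  show ?thesis using 1 2 that by blast
qed



theorem lemma5p4:
  fixes g :: "real \<Rightarrow> real \<Rightarrow> real" and k a d a_low :: real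
  assumes "Hg g" and "Hg1 g" and "k > 0"
    and "(a, d) \<in> closure (D_minus g k) \<inter> H_set"
    and "0 < a_low" and "a_low < a"
  shows "(a_low, d) \<in> D_minus g k"
proof -
  have k: "k > 0" by fact
  have al: "0 < a_low" "a_low < a" by fact+
  have clo: "(a, d) \<in> closure (D_minus g k)" and ad: "0 < a" "a < 1" "0 < d"
    using assms(4) by (auto simp: H_set_def)
  have hg: "\<And>b. 0 < b \<Longrightarrow> b < 1 \<Longrightarrow> g 0 b = 0 \<and> g 1 b = 0"
    using assms(1) unfolding Hg_def by blast
  obtain gu ga where du: "\<And>u b. b \<in> {0..1} \<Longrightarrow> ((\<lambda>u. g u b) has_real_derivative gu u b) (at u)"
    and da: "\<And>v b. 0 < b \<Longrightarrow> b < 1 \<Longrightarrow> ((\<lambda>b. g v b) has_real_derivative ga v b) (at b)"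
    using C1_partials assms(1) unfolding Hg_def by metis
  have contU: "continuous_on S (\<lambda>u. g u b)" if "b \<in> {0..1}" for b S
    by (rule continuous_at_imp_continuous_on) (use du[OF that] in \<open>blast intro: DERIV_isCont\<close>)
  have isc: "isCont (\<lambda>u. g u b) x" if "b \<in> {0..1}" for b x
    using du[OF that] by (blast intro: DERIV_isCont)
  have mono: "g v b2 < g v b1" if "0 < v" "v < 1" "0 < b1" "b1 < b2" "b2 < 1" for v b1 b2
  proof -
    have "(\<lambda>b. g v b) b1 > (\<lambda>b. g v b) b2"
    proof (rule DERIV_neg_imp_decreasing[OF \<open>b1 < b2\<close>])
      fix x assume x: "b1 \<le> x" "x \<le> b2"
      then have x01: "0 < x" "x < 1" using that by auto
      have "deriv (\<lambda>b. g v b) x < 0" using assms(2) x01 that unfolding Hg1_def by blast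
      moreover have "deriv (\<lambda>b. g v b) x = ga v x" by (rule DERIV_imp_deriv[OF da[OF x01]])
      ultimately show "\<exists>y. ((\<lambda>b. g v b) has_real_derivative y) (at x) \<and> y < 0"
        using da[OF x01] by auto
    qed
    then show ?thesis by simp
  qed
  define am where "am = (a_low + a) / 2"
  have am: "a_low < am" "am < a" "0 < am" "am < 1" using al ad unfolding am_def by auto
  define gl where "gl = (\<lambda>v. g v a_low)"
  define gm where "gm = (\<lambda>v. g v am)"
  have gl0: "gl 0 = 0" and gl1: "gl 1 = 0" using hg[of a_low] al ad unfolding gl_def by auto
  have gm1: "gm 1 = 0" using hg[of am] am unfolding gm_def by auto
  have kda: "k * d * am > 0" using k ad am by simp
  have "isCont gl 0" unfolding gl_def using isc[of a_low 0] al ad by auto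
  moreover have "k * d * am / 8 > 0" using kda by simp
  ultimately obtain d0 where d0: "d0 > 0" "\<And>v. dist v 0 < d0 \<Longrightarrow> dist (gl v) (gl 0) < k * d * am / 8"
    unfolding continuous_at_eps_delta by blast
  define v1 where "v1 = min (d0 / 2) (k * am / (8 * (1 + k)))"
  have v1: "0 < v1" "v1 < am"
  proof -
    show "0 < v1" using d0 k am unfolding v1_def by auto
    have "0 < am * 8 + am * (k * 7)" using k am by (simp add: add_pos_pos)
    then have "k * am / (8 * (1 + k)) < am" using k am by (simp add: field_simps)
    then show "v1 < am" unfolding v1_def by linarith
  qed
  have v1b: "(1 + k) * d * v1 \<le> k * d * am / 8"
  proof -
    have "v1 \<le> k * am / (8 * (1 + k))" unfolding v1_def by simp
    then have "(1 + k) * v1 \<le> k * am / 8" using k by (simp add: field_simps)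
    then have "d * ((1 + k) * v1) \<le> d * (k * am / 8)" using ad by (intro mult_left_mono) auto
    then show ?thesis by (simp add: algebra_simps)
  qed
  have glsmall: "\<bar>gl v\<bar> < k * d * am / 8" if "0 \<le> v" "v < v1" for v
    using d0(2)[of v] that v1 gl0 unfolding v1_def by (auto simp: dist_real_def)
  have "isCont gm 1" unfolding gm_def using isc[of am 1] am by auto
  moreover have "d * am / 2 > 0" using ad am by simp
  ultimately obtain d1 where d1: "d1 > 0" "\<And>v. dist v 1 < d1 \<Longrightarrow> dist (gm v) (gm 1) < d * am / 2"
    unfolding continuous_at_eps_delta by blast
  define B where "B = max (1 - d1 / 2) ((1 + am) / 2)"
  have B: "B < 1" "am < B" using d1(1) am unfolding B_def by (auto simp: less_max_iff_disj)
  have gmB: "gm v < d * am / 2" if "B \<le> v" "v \<le> 1" for v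
    using d1(2)[of v] that gm1 d1(1) unfolding B_def by (auto simp: dist_real_def)
  have "continuous_on {v1..B} (\<lambda>v. gl v - gm v)"
    unfolding gl_def gm_def using am al ad
    by (intro continuous_intros contU) auto
  then obtain x0 where x0: "x0 \<in> {v1..B}" and x0min: "\<forall>y\<in>{v1..B}. gl x0 - gm x0 \<le> gl y - gm y"
    using continuous_attains_inf[of "{v1..B}" "\<lambda>v. gl v - gm v"] v1 B by auto
  define m1 where "m1 = gl x0 - gm x0"
  have m1: "m1 > 0" using mono[of x0 a_low am] x0 v1 B am al unfolding m1_def gl_def gm_def by auto
  have m1le: "gl y - gm y \<ge> m1" if "y \<in> {v1..B}" for y using x0min that unfolding m1_def by auto
  define \<epsilon> where "\<epsilon> = min (m1 / (4 * (2 + k))) (min ((a - a_low) / 2) (d / 2))"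
  have eps: "\<epsilon> > 0" "\<epsilon> \<le> m1 / (4 * (2 + k))" "\<epsilon> \<le> (a - a_low) / 2" "\<epsilon> \<le> d / 2"
  proof -
    show "\<epsilon> > 0" using m1 k al ad unfolding \<epsilon>_def by auto
    show "\<epsilon> \<le> m1 / (4 * (2 + k))" unfolding \<epsilon>_def by linarith
    show "\<epsilon> \<le> (a - a_low) / 2" unfolding \<epsilon>_def by linarith
    show "\<epsilon> \<le> d / 2" unfolding \<epsilon>_def by linarith
  qed
  have eps2: "(2 + k) * \<epsilon> \<le> m1 / 4" using eps(2) k by (simp add: field_simps)
  have eps3: "\<epsilon> \<le> m1 / 8"
  proof -
    have "0 \<le> k * \<epsilon>" using k eps by simp
    then show ?thesis using eps2 by (simp add: algebra_simps)
  qed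
  obtain p where p: "p \<in> D_minus g k" "dist p (a, d) < \<epsilon>"
    using clo eps(1) unfolding closure_approachable by blast
  obtain a' d' where pp: "p = (a', d')" by (cases p)
  have "dist a' a < \<epsilon>" using dist_fst_le[of p "(a,d)"] p(2) pp by simp
  then have a'a: "\<bar>a' - a\<bar> < \<epsilon>" by (simp add: dist_real_def)
  have "dist d' d < \<epsilon>" using dist_snd_le[of p "(a,d)"] p(2) pp by simp
  then have d'd: "\<bar>d' - d\<bar> < \<epsilon>" by (simp add: dist_real_def)
  from p(1) pp obtain A' where a'01: "0 < a'" "a' < 1" and d'0: "0 < d'"
    and A': "a' < A'" "A' < 1" and dd: "d_diamond g k A' a' < ereal d'" and up: "d' < g A' a' / A'"
    unfolding D_minus_def H_set_def by auto
  from dd obtain dd where dd: "dd > 0" "\<forall>v\<in>{0..A'}. dd * (k + 1) * (A' - v) - g A' a' \<ge> - g v a'" "dd < d'"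
    unfolding d_diamond_def Inf_less_iff by auto
  define c' where "c' = dd * (k + 1)"
  have wit: "g v a' \<ge> g A' a' - c' * (A' - v)" if "v \<in> {0..A'}" for v
  proof -
    have "- g v a' \<le> dd * (k + 1) * (A' - v) - g A' a'" using dd(2) that by blast
    then show ?thesis unfolding c'_def by linarith
  qed
  have c'lt: "c' < (1 + k) * d'"
  proof -
    have "dd * (k + 1) < d' * (k + 1)" using dd(3) k by (intro mult_strict_right_mono) auto
    then show ?thesis unfolding c'_def by (simp add: add.commute mult.commute)
  qed
  have gA': "g A' a' > d' * A'" using up A' a'01 by (simp add: field_simps)
  have a'am: "am < a'" using a'a eps(3) unfolding am_def by auto
  have d'half: "d' > d / 2" using d'd eps(4) by auto
  have A'B: "A' \<le> B"
  proof (rule ccontr)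
    assume "\<not> A' \<le> B"
    then have "gm A' < d * am / 2" using gmB A' by auto
    moreover have "gm A' > g A' a'" using mono[of A' am a'] A' a'am am a'01 unfolding gm_def by auto
    moreover have "d' * A' > (d / 2) * am"
      using d'half a'am A' ad am by (intro mult_strict_mono) auto
    ultimately show False using gA' by simp
  qed
  have A'v1: "v1 < A'" using v1 a'am A' by simp
  define \<tau> where "\<tau> = min (m1 / 4) (k * d / 2)"
  define l where "l = min (m1 / 4) (k * d * am / 8)"
  define c where "c = (1 + k) * d - \<tau>"
  have tau: "\<tau> > 0" "\<tau> \<le> m1 / 4" "\<tau> \<le> k * d / 2" using m1 k ad unfolding \<tau>_def by auto
  have l: "l > 0" "l \<le> m1 / 4" "l \<le> k * d * am / 8" using m1 kda unfolding l_def by auto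
  have dc: "d \<le> c" using tau k ad unfolding c_def by (simp add: algebra_simps)
  have clt: "c < (1 + k) * d" using tau unfolding c_def by simp
  have dA: "(d - d') * A' \<le> \<epsilon>"
  proof (cases "d - d' \<le> 0")
    case True then have "(d - d') * A' \<le> 0" using A' a'01 by (simp add: mult_nonpos_nonneg)
    then show ?thesis using eps by simp
  next
    case False
    then have "(d - d') * A' \<le> (d - d') * 1" using A' a'01 by (intro mult_left_mono) auto
    then show ?thesis using d'd by simp
  qed
  have GA: "gl A' > d * A' + l"
  proof -
    have "gl A' - gm A' \<ge> m1" using m1le A'B A'v1 by auto
    moreover have "gm A' > g A' a'" using mono[of A' am a'] A' a'am am a'01 unfolding gm_def by auto
    ultimately show ?thesis using gA' dA l eps3 by (simp add: algebra_simps)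
  qed
  have low: "\<forall>v\<in>{0..A'}. gl v > l + d * A' - c * (A' - v)"
  proof
    fix v assume v: "v \<in> {0..A'}"
    show "gl v > l + d * A' - c * (A' - v)"
    proof (cases "v < v1")
      case True
      have g1: "\<bar>gl v\<bar> < k * d * am / 8" using glsmall True v by auto
      have "c * v \<le> ((1 + k) * d) * v1" using clt dc ad v True by (intro mult_mono) auto
      then have cv: "c * v \<le> k * d * am / 8" using v1b by simp
      have "(k * d / 2) * am \<le> (c - d) * A'"
      proof (rule mult_mono)
        show "k * d / 2 \<le> c - d" using tau unfolding c_def by (simp add: algebra_simps)
        show "am \<le> A'" using a'am A' by simp
        show "0 \<le> c - d" using dc by simp
        show "0 \<le> am" using am by simp
      qed
      then show ?thesis using g1 cv l by (simp add: algebra_simps)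
    next
      case False
      then have vB: "v \<in> {v1..B}" using v A'B by auto
      have "gl v - gm v \<ge> m1" using m1le vB by auto
      moreover have "gm v \<ge> g v a'" using mono[of v am a'] vB v1 B A' a'am am a'01
        unfolding gm_def by (auto intro: less_imp_le)
      moreover have "g v a' \<ge> g A' a' - c' * (A' - v)" using wit v by auto
      moreover have "(c' - c) * (A' - v) \<le> \<tau> + (1 + k) * \<epsilon>"
      proof -
        have X: "c' - c \<le> \<tau> + (1 + k) * \<epsilon>"
        proof -
          have "(1 + k) * (d' - d) \<le> (1 + k) * \<epsilon>" using d'd k by (intro mult_left_mono) auto
          then show ?thesis using c'lt unfolding c_def by (simp add: algebra_simps)
        qed
        show ?thesis
        proof (cases "c' - c \<le> 0")
          case True then have "(c' - c) * (A' - v) \<le> 0" using v by (simp add: mult_nonpos_nonneg)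
          then show ?thesis using tau eps k by (smt (verit) mult_nonneg_nonneg)
        next
          case False then have "(c' - c) * (A' - v) \<le> (c' - c) * 1" using v A' by (intro mult_left_mono) auto
          then show ?thesis using X by simp
        qed
      qed
      ultimately show ?thesis using gA' dA l tau eps2 by (simp add: algebra_simps)
    qed
  qed
  have contgl: "continuous_on {0..1} gl" unfolding gl_def using al ad by (intro contU) auto
  obtain Y where Y: "A' < Y" "Y < 1" "gl Y > d * Y" and ch: "\<forall>v\<in>{0..Y}. gl Y - gl v \<le> c * (Y - v)"
    using core[OF contgl _ _ l(1) dc GA] A' a'01 gl1 ad l low by auto
  define dl where "dl = c / (k + 1)"
  have dl: "dl > 0" "dl < d" using dc ad clt k unfolding dl_def by (auto simp: field_simps)
  have mem: "dl \<in> {d. d > 0 \<and> (\<forall>v\<in>{0..Y}. d * (k + 1) * (Y - v) - g Y a_low \<ge> - g v a_low)}"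
  proof -
    have e: "dl * (k + 1) = c" unfolding dl_def using k by simp
    have "\<forall>v\<in>{0..Y}. dl * (k + 1) * (Y - v) - g Y a_low \<ge> - g v a_low"
    proof
      fix v assume "v \<in> {0..Y}"
      then have "g Y a_low - g v a_low \<le> c * (Y - v)" using ch unfolding gl_def by blast
      then show "dl * (k + 1) * (Y - v) - g Y a_low \<ge> - g v a_low" unfolding e by linarith
    qed
    then show ?thesis using dl(1) by blast
  qed
  have "d_diamond g k Y a_low \<le> ereal dl"
    unfolding d_diamond_def by (rule Inf_lower) (use mem in blast)
  also have "\<dots> < ereal d" using dl by simp
  finally have dia: "d_diamond g k Y a_low < ereal d" .
  have Y0: "0 < Y" using Y A' a'01 by simp
  have "d < g Y a_low / Y" using Y(3) Y0 unfolding gl_def by (simp add: field_simps)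
  moreover have "a_low < Y" using Y A' a'am am by simp
  ultimately show ?thesis unfolding D_minus_def H_set_def using al ad dia Y by auto
qed
end
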